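(* Let $\Gamma$ be a basis and $\sigma\in\mathbb{T}$ with $\sigma\neq\omega$ (i.e. $\sigma$ is not equivalent to $\omega$). Then: (1) $\Gamma\vdash x:\sigma$ iff there is $\tau$ with $x:\tau\in\Gamma$ and $\tau\le\sigma$; (2) $\Gamma\vdash\lambda x.M:\sigma$ iff there exist a finite set $I$ and types $(\sigma_i)_{i\in I},(\tau_i)_{i\in I}$ with $\Gamma,x:\sigma_i\vdash M:\tau_i$ for all $i\in I$ and $\bigcap_{i\in I}(\sigma_i\to\tau_i)\le\sigma$; (3) $\Gamma\vdash MN:\sigma$ iff there is $\tau$ with $\Gamma\vdash M:\tau\to\sigma$ and $\Gamma\vdash N:\tau$; (4) $\Gamma\vdash\langle l_i=M_i\mid i\in I\rangle:\sigma$ iff for each $i\in I$ there is $\sigma_i$ with $\Gamma\vdash M_i:\sigma_i$ and $\langle l_i:\sigma_i\mid i\in I\rangle\le\sigma$; (5) $\Gamma\vdash M.l:\sigma$ iff $\Gamma\vdash M:\langle l:\sigma\rangle$; (6) $\Gamma\vdash M\oplus R:\sigma$ iff there exist $\rho_1,\rho_2$ with $\Gamma\vdash M:\rho_1$, $\Gamma\vdash R:\rho_2$, $\mathit{lbl}(R)=\mathit{lbl}(\rho_2)$ and $\rho_1+\rho_2\le\sigma$.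
   Context: \textbf{Terms.} $\Lambda_R\ni M,N ::= x\mid\lambda x.M\mid MN\mid M.l\mid R\mid M\oplus R$, records $R ::= \langle l_i=M_i\mid i\in I\rangle$ ($I$ finite, labels pairwise distinct), $\mathit{lbl}(\langle l_i=M_i\mid i\in I\rangle)=\{l_i\mid i\in I\}$. \textbf{Types.} $\mathbb{T}\ni\sigma ::= a\mid\omega\mid\sigma_1\to\sigma_2\mid\sigma_1\cap\sigma_2\mid\rho$, $\mathbb{T}_R\ni\rho ::= \langle\rangle\mid\langle l:\sigma\rangle\mid\rho_1+\rho_2\mid\rho_1\cap\rho_2$. Subtyping $\le$: least preorder with $\sigma\le\omega$; $\omega\le\omega\to\omega$; $\sigma\cap\tau\le\sigma,\tau$; $\sigma\le\tau_1,\sigma\le\tau_2\Rightarrow\sigma\le\tau_1\cap\tau_2$; $(\sigma\to\tau_1)\cap(\sigma\to\tau_2)\le\sigma\to\tau_1\cap\tau_2$; $\sigma_2\le\sigma_1,\tau_1\le\tau_2\Rightarrow\sigma_1\to\tau_1\le\sigma_2\to\tau_2$; $\langle l:\sigma\rangle\le\langle\rangle$; $\langle l:\sigma\rangle\cap\langle l:\tau\rangle\le\langle l:\sigma\cap\tau\rangle$; $\sigma\le\tau\Rightarrow\langle l:\sigma\rangle\le\langle l:\tau\rangle$; $\rho+\langle\rangle=\langle\rangle+\rho=\rho$; $(\rho_1+\rho_2)+\rho_3=\rho_1+(\rho_2+\rho_3)$; $(\rho_1\cap\rho_2)+\rho_3=(\rho_1+\rho_3)\cap(\rho_2+\rho_3)$;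 $\langle l:\sigma\rangle+(\langle l:\tau\rangle\cap\rho)=\langle l:\tau\rangle\cap\rho$; $\langle l:\sigma\rangle+(\langle l':\tau\rangle\cap\rho)=\langle l':\tau\rangle\cap(\langle l:\sigma\rangle+\rho)$ if $l\neq l'$; $\rho_1\le\rho_2\Rightarrow\rho_1+\rho\le\rho_2+\rho$; $\rho_1=\rho_2\Rightarrow\rho+\rho_1=\rho+\rho_2$ ($=$ is $\le$ both ways). Notation $\langle l_i:\sigma_i\mid i\in I\rangle=\bigcap_{i\in I}\langle l_i:\sigma_i\rangle$ ($\langle\rangle$ if $I=\emptyset$). $\mathit{lbl}(\langle\rangle)=\emptyset$, $\mathit{lbl}(\langle l:\sigma\rangle)=\{l\}$, $\mathit{lbl}(\rho_1\cap\rho_2)=\mathit{lbl}(\rho_1+\rho_2)=\mathit{lbl}(\rho_1)\cup\mathit{lbl}(\rho_2)$. \textbf{Type assignment.} A basis is a finite set of $x:\sigma$ with distinct variables; $\Gamma,x:\sigma$ presupposes $x\notin\mathrm{dom}(\Gamma)$. Rules: $\Gamma\vdash x:\sigma$ if $x:\sigma\in\Gamma$; from $\Gamma,x:\sigma\vdash M:\tau$ infer $\Gamma\vdash\lambda x.M:\sigma\to\tau$; from $\Gamma\vdash M:\sigma\to\tau$, $\Gamma\vdash N:\sigma$ infer $\Gamma\vdash MN:\tau$; $\cap$-introduction; $\Gamma\vdash M:\omega$; subsumption along $\le$; $\Gamma\vdash\langle l_i=M_i\mid i\in I\rangle:\langle\rangle$; from $\Gamma\vdash M_k:\sigma$, $k\in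 I$ infer $\Gamma\vdash\langle l_i=M_i\mid i\in I\rangle:\langle l_k:\sigma\rangle$; from $\Gamma\vdash M:\langle l:\sigma\rangle$ infer $\Gamma\vdash M.l:\sigma$; from $\Gamma\vdash M:\rho_1$, $\Gamma\vdash R:\rho_2$, $\mathit{lbl}(R)=\mathit{lbl}(\rho_2)$ infer $\Gamma\vdash M\oplus R:\rho_1+\rho_2$. *)

theory Defs
  imports Main
begin

type_synonym var = nat
type_synonym label = nat
type_synonym atom = nat

text \<open>Terms of Lambda_R. A record is a list of (label, term) pairs; its
  well-formedness (pairwise distinct labels) is expressed by rec_wf.\<close>
datatype trm =
    Var var
  | Lam var trm
  | App trm trm
  | Sel trm label
  | Rec "(label \<times> trm) list"
  | Ext trm "(label \<times> trm) list"

definition rec_wf :: "(label \<times> trm) list \<Rightarrow> bool" where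
  "rec_wf fs \<longleftrightarrow> distinct (map fst fs)"

definition lbl_rec :: "(label \<times> trm) list \<Rightarrow> label set" where
  "lbl_rec fs = set (map fst fs)"

text \<open>Raw type syntax: one datatype; the sorts T and T_R are carved out by
  the predicates wf_ty and is_rec.  An intersection of two record types is
  itself a record type.\<close>
datatype ty =
    TVar atom
  | Omega
  | Arr ty ty
  | Inter ty ty
  | REmpty
  | RField label ty
  | RPlus ty ty

inductive wf_ty :: "ty \<Rightarrow> bool" and is_rec :: "ty \<Rightarrow> bool" where
  "wf_ty (TVar a)"
| "wf_ty Omega"
| "wf_ty s \<Longrightarrow> wf_ty t \<Longrightarrow> wf_ty (Arr s t)"
| "wf_ty s \<Longrightarrow> wf_ty t \<Longrightarrow> wf_ty (Inter s t)"
| "is_rec r \<Longrightarrow> wf_ty r"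
| "is_rec REmpty"
| "wf_ty s \<Longrightarrow> is_rec (RField l s)"
| "is_rec r1 \<Longrightarrow> is_rec r2 \<Longrightarrow> is_rec (RPlus r1 r2)"
| "is_rec r1 \<Longrightarrow> is_rec r2 \<Longrightarrow> is_rec (Inter r1 r2)"

fun lbl_ty :: "ty \<Rightarrow> label set" where
  "lbl_ty REmpty = {}"
| "lbl_ty (RField l s) = {l}"
| "lbl_ty (Inter r1 r2) = lbl_ty r1 \<union> lbl_ty r2"
| "lbl_ty (RPlus r1 r2) = lbl_ty r1 \<union> lbl_ty r2"
| "lbl_ty _ = {}"

text \<open>Subtyping: the least preorder on T closed under the listed rules.
  Equations rho = rho' are rendered as two inequalities.\<close>
inductive sub :: "ty \<Rightarrow> ty \<Rightarrow> bool" (infix "\<le>\<^sub>T" 50) where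
  refl: "wf_ty s \<Longrightarrow> s \<le>\<^sub>T s"
| trans: "s \<le>\<^sub>T t \<Longrightarrow> t \<le>\<^sub>T u \<Longrightarrow> s \<le>\<^sub>T u"
| top: "wf_ty s \<Longrightarrow> s \<le>\<^sub>T Omega"
| omega_arr: "Omega \<le>\<^sub>T Arr Omega Omega"
| inter_l: "wf_ty s \<Longrightarrow> wf_ty t \<Longrightarrow> Inter s t \<le>\<^sub>T s"
| inter_r: "wf_ty s \<Longrightarrow> wf_ty t \<Longrightarrow> Inter s t \<le>\<^sub>T t"
| inter_glb: "s \<le>\<^sub>T t1 \<Longrightarrow> s \<le>\<^sub>T t2 \<Longrightarrow> s \<le>\<^sub>T Inter t1 t2"
| arr_inter: "wf_ty s \<Longrightarrow> wf_ty t1 \<Longrightarrow> wf_ty t2 \<Longrightarrow>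
     Inter (Arr s t1) (Arr s t2) \<le>\<^sub>T Arr s (Inter t1 t2)"
| arr: "s2 \<le>\<^sub>T s1 \<Longrightarrow> t1 \<le>\<^sub>T t2 \<Longrightarrow> Arr s1 t1 \<le>\<^sub>T Arr s2 t2"
| field_empty: "wf_ty s \<Longrightarrow> RField l s \<le>\<^sub>T REmpty"
| field_inter: "wf_ty s \<Longrightarrow> wf_ty t \<Longrightarrow>
     Inter (RField l s) (RField l t) \<le>\<^sub>T RField l (Inter s t)"
| field: "s \<le>\<^sub>T t \<Longrightarrow> RField l s \<le>\<^sub>T RField l t"
| plus_empty_r1: "is_rec r \<Longrightarrow> RPlus r REmpty \<le>\<^sub>T r"
| plus_empty_r2: "is_rec r \<Longrightarrow> r \<le>\<^sub>T RPlus r REmpty"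
| plus_empty_l1: "is_rec r \<Longrightarrow> RPlus REmpty r \<le>\<^sub>T r"
| plus_empty_l2: "is_rec r \<Longrightarrow> r \<le>\<^sub>T RPlus REmpty r"
| plus_assoc1: "is_rec r1 \<Longrightarrow> is_rec r2 \<Longrightarrow> is_rec r3 \<Longrightarrow>
     RPlus (RPlus r1 r2) r3 \<le>\<^sub>T RPlus r1 (RPlus r2 r3)"
| plus_assoc2: "is_rec r1 \<Longrightarrow> is_rec r2 \<Longrightarrow> is_rec r3 \<Longrightarrow>
     RPlus r1 (RPlus r2 r3) \<le>\<^sub>T RPlus (RPlus r1 r2) r3"
| plus_distr1: "is_rec r1 \<Longrightarrow> is_rec r2 \<Longrightarrow> is_rec r3 \<Longrightarrow>
     RPlus (Inter r1 r2) r3 \<le>\<^sub>T Inter (RPlus r1 r3) (RPlus r2 r3)"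
| plus_distr2: "is_rec r1 \<Longrightarrow> is_rec r2 \<Longrightarrow> is_rec r3 \<Longrightarrow>
     Inter (RPlus r1 r3) (RPlus r2 r3) \<le>\<^sub>T RPlus (Inter r1 r2) r3"
| plus_same1: "wf_ty s \<Longrightarrow> wf_ty t \<Longrightarrow> is_rec r \<Longrightarrow>
     RPlus (RField l s) (Inter (RField l t) r) \<le>\<^sub>T Inter (RField l t) r"
| plus_same2: "wf_ty s \<Longrightarrow> wf_ty t \<Longrightarrow> is_rec r \<Longrightarrow>
     Inter (RField l t) r \<le>\<^sub>T RPlus (RField l s) (Inter (RField l t) r)"
| plus_diff1: "l \<noteq> l' \<Longrightarrow> wf_ty s \<Longrightarrow> wf_ty t \<Longrightarrow> is_rec r \<Longrightarrow>
     RPlus (RField l s) (Inter (RField l' t) r) \<le>\<^sub>T Inter (RField l' t) (RPlus (RField l s) r)"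
| plus_diff2: "l \<noteq> l' \<Longrightarrow> wf_ty s \<Longrightarrow> wf_ty t \<Longrightarrow> is_rec r \<Longrightarrow>
     Inter (RField l' t) (RPlus (RField l s) r) \<le>\<^sub>T RPlus (RField l s) (Inter (RField l' t) r)"
| plus_mono_l: "r1 \<le>\<^sub>T r2 \<Longrightarrow> is_rec r1 \<Longrightarrow> is_rec r2 \<Longrightarrow> is_rec r \<Longrightarrow>
     RPlus r1 r \<le>\<^sub>T RPlus r2 r"
| plus_cong_r: "r1 \<le>\<^sub>T r2 \<Longrightarrow> r2 \<le>\<^sub>T r1 \<Longrightarrow> is_rec r1 \<Longrightarrow> is_rec r2 \<Longrightarrow> is_rec r \<Longrightarrow>
     RPlus r r1 \<le>\<^sub>T RPlus r r2"

definition ty_eq :: "ty \<Rightarrow> ty \<Rightarrow> bool" where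
  "ty_eq s t \<longleftrightarrow> s \<le>\<^sub>T t \<and> t \<le>\<^sub>T s"

fun inter_arrs :: "(ty \<times> ty) list \<Rightarrow> ty" where
  "inter_arrs [] = Omega"
| "inter_arrs [(s, t)] = Arr s t"
| "inter_arrs ((s, t) # ps) = Inter (Arr s t) (inter_arrs ps)"

fun rec_ty :: "(label \<times> ty) list \<Rightarrow> ty" where
  "rec_ty [] = REmpty"
| "rec_ty [(l, s)] = RField l s"
| "rec_ty ((l, s) # ps) = Inter (RField l s) (rec_ty ps)"

type_synonym basis = "var \<rightharpoonup> ty"

definition is_basis :: "basis \<Rightarrow> bool" where
  "is_basis \<Gamma> \<longleftrightarrow> finite (dom \<Gamma>) \<and> (\<forall>x s. \<Gamma> x = Some s \<longrightarrow> wf_ty s)"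

text \<open>Type assignment. Gamma, x:s is the update Gamma(x := Some s),
  presupposing x not in dom Gamma.\<close>
inductive typing :: "basis \<Rightarrow> trm \<Rightarrow> ty \<Rightarrow> bool" where
  t_var: "\<Gamma> x = Some s \<Longrightarrow> typing \<Gamma> (Var x) s"
| t_lam: "x \<notin> dom \<Gamma> \<Longrightarrow> wf_ty s \<Longrightarrow> typing (\<Gamma>(x \<mapsto> s)) M t \<Longrightarrow> typing \<Gamma> (Lam x M) (Arr s t)"
| t_app: "typing \<Gamma> M (Arr s t) \<Longrightarrow> typing \<Gamma> N s \<Longrightarrow> typing \<Gamma> (App M N) t"
| t_inter: "typing \<Gamma> M s \<Longrightarrow> typing \<Gamma> M t \<Longrightarrow> typing \<Gamma> M (Inter s t)"
| t_omega: "typing \<Gamma> M Omega"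
| t_sub: "typing \<Gamma> M s \<Longrightarrow> s \<le>\<^sub>T t \<Longrightarrow> typing \<Gamma> M t"
| t_rec_empty: "typing \<Gamma> (Rec fs) REmpty"
| t_rec_field: "(l, M) \<in> set fs \<Longrightarrow> typing \<Gamma> M s \<Longrightarrow> typing \<Gamma> (Rec fs) (RField l s)"
| t_sel: "typing \<Gamma> M (RField l s) \<Longrightarrow> typing \<Gamma> (Sel M l) s"
| t_ext: "typing \<Gamma> M r1 \<Longrightarrow> typing \<Gamma> (Rec fs) r2 \<Longrightarrow> is_rec r1 \<Longrightarrow> is_rec r2 \<Longrightarrow>
     lbl_rec fs = lbl_ty r2 \<Longrightarrow> typing \<Gamma> (Ext M fs) (RPlus r1 r2)"

end

theory Submission
  imports Defs
begin



lemmas wi = wf_ty_is_rec.intros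
declare sub.trans[trans]

inductive_cases wfF: "wf_ty (RField l s)"
inductive_cases wfA: "wf_ty (Arr s t)"
inductive_cases wfI: "wf_ty (Inter s t)"
inductive_cases rI: "is_rec (Inter s t)"
inductive_cases rP: "is_rec (RPlus s t)"
inductive_cases rF: "is_rec (RField l s)"
inductive_cases rT: "is_rec (TVar a)"
inductive_cases rO: "is_rec Omega"
inductive_cases rA: "is_rec (Arr s t)"

lemma wf_REmpty: "wf_ty REmpty" by (rule wi(5)[OF wi(6)])

lemma sub_wf: "s \<le>\<^sub>T t \<Longrightarrow> wf_ty s \<and> wf_ty t"
  by (induction rule: sub.induct) (auto intro: wi)

lemma sub_wf1: "s \<le>\<^sub>T t \<Longrightarrow> wf_ty s" using sub_wf by blast
lemma sub_wf2: "s \<le>\<^sub>T t \<Longrightarrow> wf_ty t" using sub_wf by blast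

lemma rec_wf': "is_rec r \<Longrightarrow> wf_ty r" by (rule wi)

lemma wf_field: "wf_ty (RField l s) \<longleftrightarrow> wf_ty s"
  by (auto elim: wfF rF intro: wi)

lemma inter_mono: "a \<le>\<^sub>T a' \<Longrightarrow> b \<le>\<^sub>T b' \<Longrightarrow> Inter a b \<le>\<^sub>T Inter a' b'"
  by (meson sub.inter_glb sub.inter_l sub.inter_r sub.trans sub_wf)

lemma inter_swap: "wf_ty f \<Longrightarrow> wf_ty g \<Longrightarrow> wf_ty r \<Longrightarrow> Inter g (Inter f r) \<le>\<^sub>T Inter f (Inter g r)"
  by (meson sub.inter_glb sub.inter_l sub.inter_r sub.trans wi)

lemma omega_le: "Omega \<le>\<^sub>T s \<Longrightarrow> wf_ty t \<Longrightarrow> t \<le>\<^sub>T s"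
  by (meson sub.top sub.trans)

lemma rec_le_empty: "is_rec r \<Longrightarrow> r \<le>\<^sub>T REmpty"
proof (induction r)
  case (RField l s) then show ?case by (auto elim: rF intro: sub.field_empty)
next
  case (Inter r1 r2) then show ?case by (meson rI sub.inter_l sub.trans wi)
next
  case (RPlus r1 r2)
  then have a: "is_rec r1" "is_rec r2" by (auto elim: rP)
  have "RPlus r1 r2 \<le>\<^sub>T RPlus REmpty r2" using RPlus a by (intro sub.plus_mono_l) (auto intro: wi)
  also have "\<dots> \<le>\<^sub>T r2" by (rule sub.plus_empty_l1[OF a(2)])
  finally show ?case using RPlus a by (meson sub.trans)
qed (auto elim: rT rO rA intro: sub.refl wi)

fun fl :: "(label \<times> ty) list \<Rightarrow> ty" where
  "fl [] = REmpty"
| "fl ((l, s) # ps) = Inter (RField l s) (fl ps)"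

definition wfl :: "(label \<times> ty) list \<Rightarrow> bool" where
  "wfl ps \<longleftrightarrow> (\<forall>(l, s) \<in> set ps. wf_ty s)"

lemma wfl_simps[simp]: "wfl [] = True" "wfl ((l,s)#ps) = (wf_ty s \<and> wfl ps)"
  "wfl (ps @ qs) = (wfl ps \<and> wfl qs)"
  by (auto simp: wfl_def)

lemma is_rec_fl: "wfl ps \<Longrightarrow> is_rec (fl ps)"
  by (induction ps rule: fl.induct) (auto intro: wi)

lemma wf_fl: "wfl ps \<Longrightarrow> wf_ty (fl ps)"
  by (simp add: is_rec_fl rec_wf')

lemma lbl_fl: "lbl_ty (fl ps) = fst ` set ps"
  by (induction ps rule: fl.induct) auto

lemma fl_append: "wfl ps \<Longrightarrow> wfl qs \<Longrightarrow> ty_eq (fl (ps @ qs)) (Inter (fl ps) (fl qs))"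
proof (induction ps rule: fl.induct)
  case 1
  have r: "is_rec (fl qs)" using is_rec_fl 1 by simp
  then have w: "wf_ty (fl qs)" by (rule rec_wf')
  show ?case unfolding ty_eq_def using r w
    by (simp add: sub.inter_glb sub.inter_r rec_le_empty sub.refl wf_REmpty)
next
  case (2 l s ps)
  then have w: "wf_ty s" "wfl ps" "wf_ty (fl ps)" "wf_ty (fl qs)" "wf_ty (RField l s)"
    by (auto simp: wf_fl wf_field)
  have ih: "ty_eq (fl (ps @ qs)) (Inter (fl ps) (fl qs))" using 2 by auto
  have "fl ((l,s)#ps @ qs) = Inter (RField l s) (fl (ps @ qs))" by simp
  show ?case unfolding ty_eq_def
  proof
    have "Inter (RField l s) (fl (ps @ qs)) \<le>\<^sub>T Inter (RField l s) (Inter (fl ps) (fl qs))"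
      using ih w by (auto simp: ty_eq_def intro: inter_mono sub.refl)
    also have "\<dots> \<le>\<^sub>T Inter (Inter (RField l s) (fl ps)) (fl qs)"
      using w by (meson sub.inter_glb sub.inter_l sub.inter_r sub.trans wi)
    finally show "fl (((l, s) # ps) @ qs) \<le>\<^sub>T Inter (fl ((l, s) # ps)) (fl qs)" by simp
  next
    have "Inter (Inter (RField l s) (fl ps)) (fl qs) \<le>\<^sub>T Inter (RField l s) (Inter (fl ps) (fl qs))"
      using w by (meson sub.inter_glb sub.inter_l sub.inter_r sub.trans wi)
    also have "\<dots> \<le>\<^sub>T Inter (RField l s) (fl (ps @ qs))"
      using ih w by (auto simp: ty_eq_def intro: inter_mono sub.refl)
    finally show "Inter (fl ((l, s) # ps)) (fl qs) \<le>\<^sub>T fl (((l, s) # ps) @ qs)" by simp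
  qed
qed

lemma fld_in: "wfl ps \<Longrightarrow> wf_ty s \<Longrightarrow> l \<in> fst ` set ps \<Longrightarrow>
   ty_eq (RPlus (RField l s) (fl ps)) (fl ps)"
proof (induction ps rule: fl.induct)
  case 1 then show ?case by simp
next
  case (2 l' t qs)
  then have w: "wf_ty t" "wfl qs" "is_rec (fl qs)" "wf_ty (RField l' t)" "wf_ty (fl qs)"
    by (auto simp: is_rec_fl wf_fl wf_field)
  show ?case
  proof (cases "l = l'")
    case True
    then show ?thesis using w 2 by (auto simp: ty_eq_def intro: sub.plus_same1 sub.plus_same2)
  next
    case False
    then have ih: "ty_eq (RPlus (RField l s) (fl qs)) (fl qs)" using 2 by auto
    show ?thesis unfolding ty_eq_def fl.simps
    proof
      have "RPlus (RField l s) (Inter (RField l' t) (fl qs)) \<le>\<^sub>T Inter (RField l' t) (RPlus (RField l s) (fl qs))"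
        using False w 2 by (intro sub.plus_diff1) auto
      also have "\<dots> \<le>\<^sub>T Inter (RField l' t) (fl qs)"
        using ih w by (auto simp: ty_eq_def intro: inter_mono sub.refl)
      finally show "RPlus (RField l s) (Inter (RField l' t) (fl qs)) \<le>\<^sub>T Inter (RField l' t) (fl qs)" .
    next
      have "Inter (RField l' t) (fl qs) \<le>\<^sub>T Inter (RField l' t) (RPlus (RField l s) (fl qs))"
        using ih w by (auto simp: ty_eq_def intro: inter_mono sub.refl)
      also have "\<dots> \<le>\<^sub>T RPlus (RField l s) (Inter (RField l' t) (fl qs))"
        using False w 2 by (intro sub.plus_diff2) auto
      finally show "Inter (RField l' t) (fl qs) \<le>\<^sub>T RPlus (RField l s) (Inter (RField l' t) (fl qs))" .
    qed
  qed
qed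

lemma fld_notin: "wfl ps \<Longrightarrow> wf_ty s \<Longrightarrow> l \<notin> fst ` set ps \<Longrightarrow>
   ty_eq (RPlus (RField l s) (fl ps)) (fl ((l, s) # ps))"
proof (induction ps rule: fl.induct)
  case 1
  have f: "is_rec (RField l s)" "wf_ty (RField l s)" using 1 by (auto intro: wi)
  show ?case unfolding ty_eq_def fl.simps
  proof
    show "RPlus (RField l s) REmpty \<le>\<^sub>T Inter (RField l s) REmpty"
      using f sub.plus_empty_r1[OF f(1)]
      by (meson sub.inter_glb sub.refl sub.field_empty sub.trans 1)
    show "Inter (RField l s) REmpty \<le>\<^sub>T RPlus (RField l s) REmpty"
      using f sub.plus_empty_r2[OF f(1)]
      by (meson sub.inter_l sub.trans wi)
  qed
next
  case (2 l' t qs)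
  then have w: "wf_ty t" "wfl qs" "is_rec (fl qs)" "wf_ty (RField l' t)" "wf_ty (fl qs)" "wf_ty (RField l s)"
    "l \<noteq> l'"
    by (auto simp: is_rec_fl wf_fl wf_field)
  have ih: "ty_eq (RPlus (RField l s) (fl qs)) (Inter (RField l s) (fl qs))" using 2 by auto
  show ?case unfolding ty_eq_def fl.simps
  proof
    have "RPlus (RField l s) (Inter (RField l' t) (fl qs)) \<le>\<^sub>T Inter (RField l' t) (RPlus (RField l s) (fl qs))"
      using w 2 by (intro sub.plus_diff1) auto
    also have "\<dots> \<le>\<^sub>T Inter (RField l' t) (Inter (RField l s) (fl qs))"
      using ih w by (auto simp: ty_eq_def intro: inter_mono sub.refl)
    also have "\<dots> \<le>\<^sub>T Inter (RField l s) (Inter (RField l' t) (fl qs))"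
      using w by (intro inter_swap)
    finally show "RPlus (RField l s) (Inter (RField l' t) (fl qs)) \<le>\<^sub>T Inter (RField l s) (Inter (RField l' t) (fl qs))" .
  next
    have "Inter (RField l s) (Inter (RField l' t) (fl qs)) \<le>\<^sub>T Inter (RField l' t) (Inter (RField l s) (fl qs))"
      using w by (intro inter_swap)
    also have "\<dots> \<le>\<^sub>T Inter (RField l' t) (RPlus (RField l s) (fl qs))"
      using ih w by (auto simp: ty_eq_def intro: inter_mono sub.refl)
    also have "\<dots> \<le>\<^sub>T RPlus (RField l s) (Inter (RField l' t) (fl qs))"
      using w 2 by (intro sub.plus_diff2) auto
    finally show "Inter (RField l s) (Inter (RField l' t) (fl qs)) \<le>\<^sub>T RPlus (RField l s) (Inter (RField l' t) (fl qs))" .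
  qed
qed


lemma ty_eq_trans: "ty_eq a b \<Longrightarrow> ty_eq b c \<Longrightarrow> ty_eq a c"
  unfolding ty_eq_def by (meson sub.trans)
declare ty_eq_trans[trans]
lemma ty_eq_sym: "ty_eq a b \<Longrightarrow> ty_eq b a"
  unfolding ty_eq_def by blast
lemma ty_eq_inter: "ty_eq a a' \<Longrightarrow> ty_eq b b' \<Longrightarrow> ty_eq (Inter a b) (Inter a' b')"
  unfolding ty_eq_def by (meson inter_mono)



lemma plus_fl: "wfl p1 \<Longrightarrow> wfl p2 \<Longrightarrow> \<exists>q. wfl q \<and> fst ` set q = fst ` set p1 \<union> fst ` set p2
   \<and> ty_eq (RPlus (fl p1) (fl p2)) (fl q)"
proof (induction p1 rule: fl.induct)
  case 1
  have "ty_eq (RPlus (fl []) (fl p2)) (fl p2)" unfolding ty_eq_def fl.simps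
    using is_rec_fl[OF 1(2)] by (blast intro: sub.plus_empty_l1 sub.plus_empty_l2)
  then show ?case using 1 by (intro exI[of _ p2]) simp
next
  case (2 l s ps)
  then obtain q' where q': "wfl q'" "fst ` set q' = fst ` set ps \<union> fst ` set p2"
      "ty_eq (RPlus (fl ps) (fl p2)) (fl q')" by auto
  have w: "wf_ty s" "wfl ps" "is_rec (fl ps)" "is_rec (fl p2)" "is_rec (RField l s)"
    using 2(2,3) is_rec_fl wi(7) by auto
  define q1 where "q1 = (if l \<in> fst ` set p2 then p2 else (l, s) # p2)"
  have q1c: "wfl q1 \<and> fst ` set q1 = {l} \<union> fst ` set p2 \<and> ty_eq (RPlus (RField l s) (fl p2)) (fl q1)"
  proof (cases "l \<in> fst ` set p2")
    case True
    then show ?thesis using fld_in[of p2 s l] 2(3) w(1) by (auto simp: q1_def)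
  next
    case False
    then show ?thesis using fld_notin[of p2 s l] 2(3) w(1) by (auto simp: q1_def)
  qed
  then have q1: "wfl q1" "fst ` set q1 = {l} \<union> fst ` set p2" "ty_eq (RPlus (RField l s) (fl p2)) (fl q1)"
    by blast+
  have "ty_eq (RPlus (fl ((l, s) # ps)) (fl p2))
        (Inter (RPlus (RField l s) (fl p2)) (RPlus (fl ps) (fl p2)))"
    using w unfolding ty_eq_def fl.simps by (blast intro: sub.plus_distr1 sub.plus_distr2)
  also have "ty_eq \<dots> (Inter (fl q1) (fl q'))" using q1 q' by (intro ty_eq_inter)
  also have "ty_eq \<dots> (fl (q1 @ q'))" using fl_append[of q1 q'] q1 q' by (auto intro: ty_eq_sym)
  finally have "ty_eq (RPlus (fl ((l, s) # ps)) (fl p2)) (fl (q1 @ q'))"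
    .
  then show ?case using q1 q' by (intro exI[of _ "q1 @ q'"]) auto
qed



lemma not_rec1: "\<not> is_rec (TVar a)" by (rule notI, erule rT)
lemma not_rec2: "\<not> is_rec Omega" by (rule notI, erule rO)
lemma not_rec3: "\<not> is_rec (Arr s t)" by (rule notI, erule rA)
lemma normalize: "is_rec c \<Longrightarrow> \<exists>q. wfl q \<and> fst ` set q = lbl_ty c \<and> ty_eq c (fl q)"
proof (induction c)
  case REmpty
  have "ty_eq REmpty (fl [])" by (simp add: ty_eq_def sub.refl wf_REmpty)
  then show ?case by (intro exI[of _ "[]"]) simp
next
  case (RField l s)
  then have w: "wf_ty s" "wf_ty (RField l s)" by (auto elim: rF simp: wf_field)
  have "ty_eq (RField l s) (fl [(l,s)])" unfolding ty_eq_def fl.simps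
    using w by (blast intro: sub.inter_glb sub.refl sub.field_empty sub.inter_l wf_REmpty)
  then show ?case using w by (intro exI[of _ "[(l,s)]"]) simp
next
  case (Inter c1 c2)
  then have "is_rec c1" "is_rec c2" by (auto elim: rI)
  then obtain q1 q2 where q: "wfl q1" "fst ` set q1 = lbl_ty c1" "ty_eq c1 (fl q1)"
     "wfl q2" "fst ` set q2 = lbl_ty c2" "ty_eq c2 (fl q2)" using Inter.IH by blast
  have "ty_eq (Inter c1 c2) (fl (q1 @ q2))"
    using ty_eq_trans[OF ty_eq_inter[OF q(3) q(6)] ty_eq_sym[OF fl_append[OF q(1) q(4)]]] .
  then show ?case using q by (intro exI[of _ "q1 @ q2"]) auto
next
  case (RPlus c1 c2)
  then have r: "is_rec c1" "is_rec c2" by (auto elim: rP)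
  then obtain q1 q2 where q: "wfl q1" "fst ` set q1 = lbl_ty c1" "ty_eq c1 (fl q1)"
     "wfl q2" "fst ` set q2 = lbl_ty c2" "ty_eq c2 (fl q2)" using RPlus by blast
  obtain q where q': "wfl q" "fst ` set q = fst ` set q1 \<union> fst ` set q2"
      "ty_eq (RPlus (fl q1) (fl q2)) (fl q)" using plus_fl[OF q(1) q(4)] by blast
  have f: "is_rec (fl q1)" "is_rec (fl q2)" using q by (auto simp: is_rec_fl)
  have "ty_eq (RPlus c1 c2) (RPlus (fl q1) c2)"
    using q(3) r f unfolding ty_eq_def by (blast intro: sub.plus_mono_l)
  also have "ty_eq \<dots> (RPlus (fl q1) (fl q2))"
    using q(6) r f unfolding ty_eq_def by (blast intro: sub.plus_cong_r)
  also have "ty_eq \<dots> (fl q)" using q' by blast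
  finally have "ty_eq (RPlus c1 c2) (fl q)" .
  then show ?case using q q' by (intro exI[of _ q]) auto
qed (simp_all add: not_rec1 not_rec2 not_rec3)



lemma plus_right_mono: "is_rec a \<Longrightarrow> is_rec b \<Longrightarrow> is_rec c \<Longrightarrow> b \<le>\<^sub>T c \<Longrightarrow> lbl_ty b = lbl_ty c
  \<Longrightarrow> RPlus a b \<le>\<^sub>T RPlus a c"
proof (induction a arbitrary: b c)
  case REmpty
  then show ?case by (meson sub.plus_empty_l1 sub.plus_empty_l2 sub.trans)
next
  case (Inter a1 a2)
  then have r: "is_rec a1" "is_rec a2" by (auto elim: rI)
  have "RPlus (Inter a1 a2) b \<le>\<^sub>T Inter (RPlus a1 b) (RPlus a2 b)"
    using r Inter by (intro sub.plus_distr1)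
  also have "\<dots> \<le>\<^sub>T Inter (RPlus a1 c) (RPlus a2 c)"
    using r Inter by (intro inter_mono) auto
  also have "\<dots> \<le>\<^sub>T RPlus (Inter a1 a2) c"
    using r Inter by (intro sub.plus_distr2)
  finally show ?case .
next
  case (RPlus a1 a2)
  then have r: "is_rec a1" "is_rec a2" by (auto elim: rP)
  have "RPlus (RPlus a1 a2) b \<le>\<^sub>T RPlus a1 (RPlus a2 b)"
    using r RPlus by (intro sub.plus_assoc1)
  also have "\<dots> \<le>\<^sub>T RPlus a1 (RPlus a2 c)"
    using r RPlus.prems by (intro RPlus.IH(1) wi(8)) (auto intro: RPlus.IH(2))
  also have "\<dots> \<le>\<^sub>T RPlus (RPlus a1 a2) c"
    using r RPlus by (intro sub.plus_assoc2)
  finally show ?case .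
next
  case (RField l s)
  then have ws: "wf_ty s" by (auto elim: rF)
  obtain qb where qb: "wfl qb" "fst ` set qb = lbl_ty b" "ty_eq b (fl qb)"
    using normalize RField by blast
  obtain qc where qc: "wfl qc" "fst ` set qc = lbl_ty c" "ty_eq c (fl qc)"
    using normalize RField by blast
  have f: "is_rec (fl qb)" "is_rec (fl qc)" using qb qc by (auto simp: is_rec_fl)
  have bc: "fl qb \<le>\<^sub>T fl qc" using qb qc RField unfolding ty_eq_def by (meson sub.trans)
  have "RPlus (RField l s) b \<le>\<^sub>T RPlus (RField l s) (fl qb)"
    using qb RField f by (auto simp: ty_eq_def intro: sub.plus_cong_r)
  also have "\<dots> \<le>\<^sub>T RPlus (RField l s) (fl qc)"
  proof (cases "l \<in> fst ` set qb")
    case True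
    then have True': "l \<in> fst ` set qc" using qb qc RField by simp
    show ?thesis using fld_in[OF qb(1) ws True] fld_in[OF qc(1) ws True'] bc
      unfolding ty_eq_def by (meson sub.trans)
  next
    case False
    then have False': "l \<notin> fst ` set qc" using qb qc RField by simp
    have "fl ((l,s)#qb) \<le>\<^sub>T fl ((l,s)#qc)" using bc ws
      by (simp add: inter_mono sub.refl wf_field)
    then show ?thesis using fld_notin[OF qb(1) ws False] fld_notin[OF qc(1) ws False']
      unfolding ty_eq_def by (meson sub.trans)
  qed
  also have "\<dots> \<le>\<^sub>T RPlus (RField l s) c"
    using qc RField f by (auto simp: ty_eq_def intro: sub.plus_cong_r)
  finally show ?case .
qed (auto elim: rT rO rA)




lemma basis_upd: "is_basis \<Gamma> \<Longrightarrow> wf_ty s \<Longrightarrow> is_basis (\<Gamma>(x \<mapsto> s))"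
  unfolding is_basis_def by auto

lemma wf_arr: "wf_ty (Arr s t) \<longleftrightarrow> wf_ty s \<and> wf_ty t"
  by (auto elim: wfA rA intro: wi)

lemma wf_inter: "wf_ty (Inter s t) \<Longrightarrow> wf_ty s \<and> wf_ty t"
  by (auto elim!: wfI rI intro: wi)

lemma typing_wf: "typing \<Gamma> M s \<Longrightarrow> is_basis \<Gamma> \<Longrightarrow> wf_ty s"
proof (induction rule: typing.induct)
  case (t_var \<Gamma> x s) then show ?case by (auto simp: is_basis_def)
next
  case (t_sel \<Gamma> M l s) then show ?case by (auto simp: wf_field)
next
  case (t_lam x \<Gamma> s M t) then show ?case using basis_upd wi(3) by blast
next
  case (t_app \<Gamma> M s t N) then show ?case using wf_arr by blast
next
  case (t_inter \<Gamma> M s t) then show ?case using wi(4) by blast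
next
  case (t_omega \<Gamma> M) then show ?case using wi(2) by blast
next
  case (t_sub \<Gamma> M s t) then show ?case using sub_wf2 by blast
next
  case (t_rec_empty \<Gamma> fs) then show ?case using wf_REmpty by blast
next
  case (t_rec_field l M fs \<Gamma> s) then show ?case using wf_field by blast
next
  case (t_ext \<Gamma> M r1 fs r2) then show ?case using wi(5)[OF wi(8)] by blast
qed

lemma omega_arr_le: "Omega \<le>\<^sub>T s \<Longrightarrow> wf_ty \<tau> \<Longrightarrow> Omega \<le>\<^sub>T Arr \<tau> s"
  by (meson sub.arr sub.omega_arr sub.top sub.trans)

lemma var_gen: "typing \<Gamma> M \<sigma> \<Longrightarrow> is_basis \<Gamma> \<Longrightarrow> M = Var x \<Longrightarrow>
   Omega \<le>\<^sub>T \<sigma> \<or> (\<exists>\<tau>. \<Gamma> x = Some \<tau> \<and> \<tau> \<le>\<^sub>T \<sigma>)"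
proof (induction rule: typing.induct)
  case (t_var \<Gamma> x s) then show ?case by (auto simp: is_basis_def intro: sub.refl)
next
  case (t_inter \<Gamma> M s t)
  have wt: "\<And>\<tau>. \<Gamma> x = Some \<tau> \<Longrightarrow> wf_ty \<tau>" using t_inter by (auto simp: is_basis_def)
  have A: "Omega \<le>\<^sub>T s \<or> (\<exists>\<tau>. \<Gamma> x = Some \<tau> \<and> \<tau> \<le>\<^sub>T s)"
       "Omega \<le>\<^sub>T t \<or> (\<exists>\<tau>. \<Gamma> x = Some \<tau> \<and> \<tau> \<le>\<^sub>T t)" using t_inter by auto
  show ?case
  proof (cases "Omega \<le>\<^sub>T s")
    case s: True
    show ?thesis
    proof (cases "Omega \<le>\<^sub>T t")
      case True then show ?thesis using s by (auto intro: sub.inter_glb)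
    next
      case False
      then obtain \<tau> where "\<Gamma> x = Some \<tau>" "\<tau> \<le>\<^sub>T t" using A by auto
      then show ?thesis using s wt omega_le[OF s] by (blast intro: sub.inter_glb)
    qed
  next
    case False
    then obtain \<tau> where \<tau>: "\<Gamma> x = Some \<tau>" "\<tau> \<le>\<^sub>T s" using A by auto
    show ?thesis
    proof (cases "Omega \<le>\<^sub>T t")
      case True then show ?thesis using \<tau> wt omega_le[OF True] by (blast intro: sub.inter_glb)
    next
      case False
      then obtain \<tau>' where "\<Gamma> x = Some \<tau>'" "\<tau>' \<le>\<^sub>T t" using A by auto
      then show ?thesis using \<tau> by (auto intro!: sub.inter_glb)
    qed
  qed
next
  case (t_sub \<Gamma> M s t) then show ?case by (meson sub.trans)
next
  case (t_omega \<Gamma> M) then show ?case using sub.refl[OF wi(2)] by blast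
qed simp_all




definition wfps :: "(ty \<times> ty) list \<Rightarrow> bool" where
  "wfps ps \<longleftrightarrow> (\<forall>(s,t)\<in>set ps. wf_ty s \<and> wf_ty t)"

lemma wfps_simps[simp]: "wfps [] = True" "wfps ((a,b)#ps) = (wf_ty a \<and> wf_ty b \<and> wfps ps)"
  "wfps (ps @ qs) = (wfps ps \<and> wfps qs)"
  by (auto simp: wfps_def)

lemma wf_inter_arrs: "wfps ps \<Longrightarrow> wf_ty (inter_arrs ps)"
  by (induction ps rule: inter_arrs.induct) (simp_all add: wi(2) wi(3) wi(4))

lemma inter_arrs_le: "wfps ps \<Longrightarrow> (a, b) \<in> set ps \<Longrightarrow> inter_arrs ps \<le>\<^sub>T Arr a b"
proof (induction ps rule: inter_arrs.induct)
  case 1 then show ?case by simp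
next
  case (2 s t) then show ?case using sub.refl wi(3) by auto
next
  case (3 s t v va)
  have w: "wf_ty (Arr s t)" "wf_ty (inter_arrs (v # va))" "wfps (v # va)"
    using 3(2) wf_inter_arrs[of "v#va"] wi(3) by auto
  show ?case
  proof (cases "(a,b) = (s, t)")
    case True
    then show ?thesis using w sub.inter_l by simp
  next
    case False
    then have "inter_arrs (v # va) \<le>\<^sub>T Arr a b" using 3 w by auto
    then show ?thesis using w sub.inter_r[OF w(1) w(2)] sub.trans by simp
  qed
qed

lemma inter_arrs_glb: "wf_ty r \<Longrightarrow> \<forall>(a,b)\<in>set ps. r \<le>\<^sub>T Arr a b \<Longrightarrow> r \<le>\<^sub>T inter_arrs ps"
proof (induction ps rule: inter_arrs.induct)
  case 1 then show ?case using sub.top by simp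
next
  case (2 s t) then show ?case by simp
next
  case (3 s t v va) then show ?case using sub.inter_glb by simp
qed

lemma typing_inter_arrs: "\<forall>(a,b)\<in>set ps. typing \<Gamma> N (Arr a b) \<Longrightarrow> typing \<Gamma> N (inter_arrs ps)"
proof (induction ps rule: inter_arrs.induct)
  case 1 then show ?case using typing.t_omega by simp
next
  case (2 s t) then show ?case by simp
next
  case (3 s t v va) then show ?case using typing.t_inter by simp
qed

lemma inter_arrs_app1: "wfps ps \<Longrightarrow> wfps qs \<Longrightarrow> inter_arrs (ps @ qs) \<le>\<^sub>T inter_arrs ps"
  by (rule inter_arrs_glb) (auto intro: wf_inter_arrs inter_arrs_le)

lemma inter_arrs_app2: "wfps ps \<Longrightarrow> wfps qs \<Longrightarrow> inter_arrs (ps @ qs) \<le>\<^sub>T inter_arrs qs"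
  by (rule inter_arrs_glb) (auto intro: wf_inter_arrs inter_arrs_le)

definition lamP where
  "lamP \<Gamma> x N ps \<longleftrightarrow> (\<forall>(s, t) \<in> set ps. wf_ty s \<and> wf_ty t \<and> x \<notin> dom \<Gamma> \<and> typing (\<Gamma>(x \<mapsto> s)) N t)"

lemma lamP_wfps: "lamP \<Gamma> x N ps \<Longrightarrow> wfps ps"
  unfolding lamP_def wfps_def by auto

lemma lamP_app: "lamP \<Gamma> x N (ps @ qs) = (lamP \<Gamma> x N ps \<and> lamP \<Gamma> x N qs)"
  unfolding lamP_def by auto

lemma lam_gen: "typing \<Gamma> M \<sigma> \<Longrightarrow> is_basis \<Gamma> \<Longrightarrow> M = Lam x N \<Longrightarrow>
  \<exists>ps. lamP \<Gamma> x N ps \<and> inter_arrs ps \<le>\<^sub>T \<sigma>"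
proof (induction rule: typing.induct)
  case (t_lam y \<Gamma> s M t)
  have "wf_ty t" using typing_wf[OF t_lam(3) basis_upd[OF t_lam(5) t_lam(2)]] .
  then show ?case using t_lam sub.refl[OF wi(3)[of s t]]
    by (intro exI[of _ "[(s,t)]"]) (auto simp: lamP_def)
next
  case (t_inter \<Gamma> M s t)
  then obtain ps qs where p: "lamP \<Gamma> x N ps" "inter_arrs ps \<le>\<^sub>T s" "lamP \<Gamma> x N qs" "inter_arrs qs \<le>\<^sub>T t"
    by blast
  have "inter_arrs (ps @ qs) \<le>\<^sub>T Inter s t"
    using p lamP_wfps inter_arrs_app1 inter_arrs_app2 sub.trans sub.inter_glb by metis
  then show ?case using p lamP_app by blast
next
  case (t_omega \<Gamma> M)
  then show ?case using sub.refl[OF wi(2)] by (intro exI[of _ "[]"]) (simp add: lamP_def)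
next
  case (t_sub \<Gamma> M s t) then show ?case using sub.trans by blast
qed simp_all

lemma app_gen: "typing \<Gamma> M \<sigma> \<Longrightarrow> is_basis \<Gamma> \<Longrightarrow> M = App P Q \<Longrightarrow>
  Omega \<le>\<^sub>T \<sigma> \<or> (\<exists>\<tau>. wf_ty \<tau> \<and> typing \<Gamma> P (Arr \<tau> \<sigma>) \<and> typing \<Gamma> Q \<tau>)"
proof (induction rule: typing.induct)
  case (t_app \<Gamma> M s t N)
  then show ?case using typing_wf by blast
next
  case (t_inter \<Gamma> M s t)
  have A: "Omega \<le>\<^sub>T s \<or> (\<exists>\<tau>. wf_ty \<tau> \<and> typing \<Gamma> P (Arr \<tau> s) \<and> typing \<Gamma> Q \<tau>)"
       "Omega \<le>\<^sub>T t \<or> (\<exists>\<tau>. wf_ty \<tau> \<and> typing \<Gamma> P (Arr \<tau> t) \<and> typing \<Gamma> Q \<tau>)" using t_inter by auto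
  have ws: "wf_ty s" "wf_ty t" using typing_wf t_inter by blast+
  show ?case
  proof (cases "Omega \<le>\<^sub>T s")
    case s: True
    show ?thesis
    proof (cases "Omega \<le>\<^sub>T t")
      case True then show ?thesis using s by (blast intro: sub.inter_glb)
    next
      case False
      then obtain \<tau> where \<tau>: "wf_ty \<tau>" "typing \<Gamma> P (Arr \<tau> t)" "typing \<Gamma> Q \<tau>" using A by auto
      have "typing \<Gamma> P (Arr \<tau> s)" using typing.t_sub[OF typing.t_omega omega_arr_le[OF s \<tau>(1)]] .
      then have "typing \<Gamma> P (Inter (Arr \<tau> s) (Arr \<tau> t))" using \<tau> typing.t_inter by blast
      then have "typing \<Gamma> P (Arr \<tau> (Inter s t))" using typing.t_sub sub.arr_inter \<tau>(1) ws by blast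
      then show ?thesis using \<tau> by blast
    qed
  next
    case False
    then obtain \<tau> where \<tau>: "wf_ty \<tau>" "typing \<Gamma> P (Arr \<tau> s)" "typing \<Gamma> Q \<tau>" using A by auto
    show ?thesis
    proof (cases "Omega \<le>\<^sub>T t")
      case True
      have "typing \<Gamma> P (Arr \<tau> t)" using typing.t_sub[OF typing.t_omega omega_arr_le[OF True \<tau>(1)]] .
      then have "typing \<Gamma> P (Inter (Arr \<tau> s) (Arr \<tau> t))" using \<tau> typing.t_inter by blast
      then have "typing \<Gamma> P (Arr \<tau> (Inter s t))" using typing.t_sub sub.arr_inter \<tau>(1) ws by blast
      then show ?thesis using \<tau> by blast
    next
      case False
      then obtain \<tau>' where \<tau>': "wf_ty \<tau>'" "typing \<Gamma> P (Arr \<tau>' t)" "typing \<Gamma> Q \<tau>'" using A by auto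
      have wi': "wf_ty (Inter \<tau> \<tau>')" using \<tau>(1) \<tau>'(1) wi(4) by blast
      have "Arr \<tau> s \<le>\<^sub>T Arr (Inter \<tau> \<tau>') s"
        using sub.arr[OF sub.inter_l[OF \<tau>(1) \<tau>'(1)] sub.refl[OF ws(1)]] .
      then have 1: "typing \<Gamma> P (Arr (Inter \<tau> \<tau>') s)" using \<tau> typing.t_sub by blast
      have "Arr \<tau>' t \<le>\<^sub>T Arr (Inter \<tau> \<tau>') t"
        using sub.arr[OF sub.inter_r[OF \<tau>(1) \<tau>'(1)] sub.refl[OF ws(2)]] .
      then have 2: "typing \<Gamma> P (Arr (Inter \<tau> \<tau>') t)" using \<tau>' typing.t_sub by blast
      have "typing \<Gamma> P (Arr (Inter \<tau> \<tau>') (Inter s t))"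
        using typing.t_sub[OF typing.t_inter[OF 1 2] sub.arr_inter[OF wi' ws]] .
      moreover have "typing \<Gamma> Q (Inter \<tau> \<tau>')" using \<tau> \<tau>' typing.t_inter by blast
      ultimately show ?thesis using wi' by blast
    qed
  qed
next
  case (t_omega \<Gamma> M) then show ?case using sub.refl[OF wi(2)] by blast
next
  case (t_sub \<Gamma> M s t)
  then have wt: "wf_ty t" using sub_wf2 by blast
  have "Omega \<le>\<^sub>T s \<or> (\<exists>\<tau>. wf_ty \<tau> \<and> typing \<Gamma> P (Arr \<tau> s) \<and> typing \<Gamma> Q \<tau>)"
    using t_sub by blast
  then show ?case
  proof
    assume "Omega \<le>\<^sub>T s" then show ?case using t_sub(2) sub.trans by blast
  next
    assume "\<exists>\<tau>. wf_ty \<tau> \<and> typing \<Gamma> P (Arr \<tau> s) \<and> typing \<Gamma> Q \<tau>"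
    then obtain \<tau> where "wf_ty \<tau>" "typing \<Gamma> P (Arr \<tau> s)" "typing \<Gamma> Q \<tau>" by blast
    then show ?case using typing.t_sub[OF _ sub.arr[OF sub.refl t_sub(2)]] by blast
  qed
qed simp_all

lemma sel_gen: "typing \<Gamma> M \<sigma> \<Longrightarrow> is_basis \<Gamma> \<Longrightarrow> M = Sel P l \<Longrightarrow>
  Omega \<le>\<^sub>T \<sigma> \<or> typing \<Gamma> P (RField l \<sigma>)"
proof (induction rule: typing.induct)
  case (t_inter \<Gamma> M s t)
  have A: "Omega \<le>\<^sub>T s \<or> typing \<Gamma> P (RField l s)" "Omega \<le>\<^sub>T t \<or> typing \<Gamma> P (RField l t)"
    using t_inter by auto
  have ws: "wf_ty s" "wf_ty t" using typing_wf t_inter by blast+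
  have c1: "typing \<Gamma> P (RField l (Inter s t))" if "typing \<Gamma> P (RField l s)" "typing \<Gamma> P (RField l t)"
    using typing.t_sub[OF typing.t_inter[OF that] sub.field_inter[OF ws]] .
  have c2: "typing \<Gamma> P (RField l (Inter s t))" if "Omega \<le>\<^sub>T s" "typing \<Gamma> P (RField l t)"
    using typing.t_sub[OF that(2) sub.field[OF sub.inter_glb[OF omega_le[OF that(1) ws(2)] sub.refl[OF ws(2)]]]] .
  have c3: "typing \<Gamma> P (RField l (Inter s t))" if "Omega \<le>\<^sub>T t" "typing \<Gamma> P (RField l s)"
    using typing.t_sub[OF that(2) sub.field[OF sub.inter_glb[OF sub.refl[OF ws(1)] omega_le[OF that(1) ws(1)]]]] .
  show ?case using A c1 c2 c3 sub.inter_glb by blast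
next
  case (t_omega \<Gamma> M) then show ?case using sub.refl[OF wi(2)] by blast
next
  case (t_sub \<Gamma> M s t)
  then show ?case using sub.trans typing.t_sub sub.field by blast
qed simp_all




lemma is_rec_rec_ty: "wfl ps \<Longrightarrow> is_rec (rec_ty ps)"
  by (induction ps rule: rec_ty.induct) (simp_all add: wi(6) wi(7) wi(9))

lemma rec_ty_le: "wfl ps \<Longrightarrow> (l, a) \<in> set ps \<Longrightarrow> rec_ty ps \<le>\<^sub>T RField l a"
proof (induction ps rule: rec_ty.induct)
  case 1 then show ?case by simp
next
  case (2 l' s) then show ?case using sub.refl wf_field by auto
next
  case (3 l' s v va)
  have w: "wf_ty (RField l' s)" "wf_ty (rec_ty (v # va))" "wfl (v # va)"
    using 3(2) is_rec_rec_ty[of "v#va"] rec_wf' wf_field by auto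
  show ?case
  proof (cases "(l, a) = (l', s)")
    case True
    then show ?thesis using w sub.inter_l by simp
  next
    case False
    then have "rec_ty (v # va) \<le>\<^sub>T RField l a" using 3 w by auto
    then show ?thesis using w sub.inter_r[OF w(1) w(2)] sub.trans by simp
  qed
qed

lemma rec_ty_glb: "wf_ty r \<Longrightarrow> r \<le>\<^sub>T REmpty \<Longrightarrow> \<forall>(l,a)\<in>set ps. r \<le>\<^sub>T RField l a \<Longrightarrow> r \<le>\<^sub>T rec_ty ps"
proof (induction ps rule: rec_ty.induct)
  case 1 then show ?case by simp
next
  case (2 s t) then show ?case by simp
next
  case (3 s t v va) then show ?case using sub.inter_glb by simp
qed

lemma typing_rec_ty: "typing \<Gamma> N REmpty \<Longrightarrow> \<forall>(l,a)\<in>set ps. typing \<Gamma> N (RField l a) \<Longrightarrow> typing \<Gamma> N (rec_ty ps)"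
proof (induction ps rule: rec_ty.induct)
  case 1 then show ?case by simp
next
  case (2 s t) then show ?case by simp
next
  case (3 s t v va) then show ?case using typing.t_inter by simp
qed

lemma zip_mem: "i < length ls \<Longrightarrow> length ss = length ls \<Longrightarrow> (ls ! i, ss ! i) \<in> set (zip ls ss)"
  by (metis length_zip min.idem nth_mem nth_zip)

lemma zip_dest: "(l, a) \<in> set (zip ls ss) \<Longrightarrow> length ss = length ls \<Longrightarrow> \<exists>i < length ls. l = ls ! i \<and> a = ss ! i"
  by (metis fst_conv in_set_conv_nth length_zip min.idem nth_zip snd_conv)

definition recP where
  "recP \<Gamma> fs ss \<longleftrightarrow> length ss = length fs \<and>
      (\<forall>i < length fs. wf_ty (ss ! i) \<and> typing \<Gamma> (snd (fs ! i)) (ss ! i))"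

lemma recP_wfl: "recP \<Gamma> fs ss \<Longrightarrow> wfl (zip (map fst fs) ss)"
  unfolding wfl_def recP_def
  by (auto dest!: zip_dest)

lemma rec_gen: "typing \<Gamma> M \<sigma> \<Longrightarrow> is_basis \<Gamma> \<Longrightarrow> M = Rec fs \<Longrightarrow>
  \<exists>ss. recP \<Gamma> fs ss \<and> rec_ty (zip (map fst fs) ss) \<le>\<^sub>T \<sigma>"
proof (induction rule: typing.induct)
  case (t_rec_empty \<Gamma> fs')
  define ss where "ss = replicate (length fs) Omega"
  have r: "recP \<Gamma> fs ss" unfolding recP_def ss_def using wi(2) typing.t_omega by simp
  then show ?case using rec_le_empty[OF is_rec_rec_ty[OF recP_wfl[OF r]]] t_rec_empty by blast
next
  case (t_rec_field l N fs' \<Gamma> s)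
  then have mem: "(l, N) \<in> set fs" by simp
  then obtain j where j: "j < length fs" "fs ! j = (l, N)" by (metis in_set_conv_nth)
  have ws: "wf_ty s" using typing_wf t_rec_field by blast
  define ss where "ss = (replicate (length fs) Omega)[j := s]"
  have r: "recP \<Gamma> fs ss" unfolding recP_def ss_def
    using wi(2) typing.t_omega j ws t_rec_field(2) by (auto simp: nth_list_update)
  have "(map fst fs ! j, ss ! j) \<in> set (zip (map fst fs) ss)"
    using zip_mem[of j "map fst fs" ss] j r by (simp add: recP_def)
  then have "(l, s) \<in> set (zip (map fst fs) ss)" using j by (simp add: ss_def)
  then show ?case using rec_ty_le[OF recP_wfl[OF r]] r by blast
next
  case (t_inter \<Gamma> M s t)
  then obtain ss1 ss2 where s: "recP \<Gamma> fs ss1" "rec_ty (zip (map fst fs) ss1) \<le>\<^sub>T s"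
     "recP \<Gamma> fs ss2" "rec_ty (zip (map fst fs) ss2) \<le>\<^sub>T t" by blast
  define ss where "ss = map (\<lambda>i. Inter (ss1 ! i) (ss2 ! i)) [0..<length fs]"
  have r: "recP \<Gamma> fs ss" using s unfolding recP_def ss_def
    by (auto intro: typing.t_inter wi(4))
  have w: "wfl (zip (map fst fs) ss)" "wfl (zip (map fst fs) ss1)" "wfl (zip (map fst fs) ss2)"
    using r s recP_wfl by blast+
  have wr: "wf_ty (rec_ty (zip (map fst fs) ss))" using is_rec_rec_ty[OF w(1)] rec_wf' by blast
  have e: "rec_ty (zip (map fst fs) ss) \<le>\<^sub>T REmpty" using is_rec_rec_ty[OF w(1)] rec_le_empty by blast
  have f: "rec_ty (zip (map fst fs) ss) \<le>\<^sub>T RField l (ss1 ! i)"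
       "rec_ty (zip (map fst fs) ss) \<le>\<^sub>T RField l (ss2 ! i)"
    if "i < length fs" "l = map fst fs ! i" for i l
  proof -
    have "(l, ss ! i) \<in> set (zip (map fst fs) ss)" using zip_mem[of i "map fst fs" ss] that r
      by (simp add: recP_def)
    then have 1: "rec_ty (zip (map fst fs) ss) \<le>\<^sub>T RField l (Inter (ss1 ! i) (ss2 ! i))"
      using rec_ty_le[OF w(1)] that by (simp add: ss_def)
    have ww: "wf_ty (ss1 ! i)" "wf_ty (ss2 ! i)" using s that by (auto simp: recP_def)
    show "rec_ty (zip (map fst fs) ss) \<le>\<^sub>T RField l (ss1 ! i)"
      using sub.trans[OF 1 sub.field[OF sub.inter_l[OF ww]]] .
    show "rec_ty (zip (map fst fs) ss) \<le>\<^sub>T RField l (ss2 ! i)"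
      using sub.trans[OF 1 sub.field[OF sub.inter_r[OF ww]]] .
  qed
  have "rec_ty (zip (map fst fs) ss) \<le>\<^sub>T rec_ty (zip (map fst fs) ss1)"
    using s(1) by (intro rec_ty_glb[OF wr e]) (auto simp: recP_def dest!: zip_dest intro: f)
  moreover have "rec_ty (zip (map fst fs) ss) \<le>\<^sub>T rec_ty (zip (map fst fs) ss2)"
    using s(3) by (intro rec_ty_glb[OF wr e]) (auto simp: recP_def dest!: zip_dest intro: f)
  ultimately have "rec_ty (zip (map fst fs) ss) \<le>\<^sub>T Inter s t"
    using s sub.trans sub.inter_glb by metis
  then show ?case using r by blast
next
  case (t_omega \<Gamma> M)
  define ss where "ss = replicate (length fs) Omega"
  have r: "recP \<Gamma> fs ss" unfolding recP_def ss_def using wi(2) typing.t_omega by simp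
  then show ?case using sub.top[OF rec_wf'[OF is_rec_rec_ty[OF recP_wfl[OF r]]]] by blast
next
  case (t_sub \<Gamma> M s t) then show ?case using sub.trans by blast
qed simp_all

definition extP where
  "extP \<Gamma> P fs \<sigma> \<rho>1 \<rho>2 \<longleftrightarrow> is_rec \<rho>1 \<and> is_rec \<rho>2 \<and> typing \<Gamma> P \<rho>1 \<and> typing \<Gamma> (Rec fs) \<rho>2 \<and>
                 lbl_rec fs = lbl_ty \<rho>2 \<and> RPlus \<rho>1 \<rho>2 \<le>\<^sub>T \<sigma>"

lemma ext_gen: "typing \<Gamma> M \<sigma> \<Longrightarrow> is_basis \<Gamma> \<Longrightarrow> M = Ext P fs \<Longrightarrow>
  Omega \<le>\<^sub>T \<sigma> \<or> (\<exists>\<rho>1 \<rho>2. extP \<Gamma> P fs \<sigma> \<rho>1 \<rho>2)"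
proof (induction rule: typing.induct)
  case (t_ext \<Gamma> M r1 fs' r2)
  then show ?case unfolding extP_def using sub.refl[OF wi(5)[OF wi(8)]] by blast
next
  case (t_inter \<Gamma> M s t)
  have A: "Omega \<le>\<^sub>T s \<or> (\<exists>\<rho>1 \<rho>2. extP \<Gamma> P fs s \<rho>1 \<rho>2)"
       "Omega \<le>\<^sub>T t \<or> (\<exists>\<rho>1 \<rho>2. extP \<Gamma> P fs t \<rho>1 \<rho>2)" using t_inter by auto
  have om: "extP \<Gamma> P fs (Inter s t) \<rho>1 \<rho>2" if "Omega \<le>\<^sub>T u" "extP \<Gamma> P fs v \<rho>1 \<rho>2"
     "(u = s \<and> v = t) \<or> (u = t \<and> v = s)" for u v \<rho>1 \<rho>2
  proof -
    have "RPlus \<rho>1 \<rho>2 \<le>\<^sub>T u" using that(1,2) omega_le wi(5)[OF wi(8)] unfolding extP_def by blast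
    then show ?thesis using that sub.inter_glb unfolding extP_def by blast
  qed
  have both: "\<exists>\<rho>1 \<rho>2. extP \<Gamma> P fs (Inter s t) \<rho>1 \<rho>2"
    if "extP \<Gamma> P fs s a1 a2" "extP \<Gamma> P fs t b1 b2" for a1 a2 b1 b2
  proof -
    have r: "is_rec a1" "is_rec a2" "is_rec b1" "is_rec b2" using that unfolding extP_def by blast+
    have w: "wf_ty a1" "wf_ty a2" "wf_ty b1" "wf_ty b2" using r rec_wf' by blast+
    have ri: "is_rec (Inter a1 b1)" "is_rec (Inter a2 b2)" using r wi(9) by blast+
    have lb: "lbl_ty (Inter a2 b2) = lbl_ty a2" "lbl_ty (Inter a2 b2) = lbl_ty b2"
      using that unfolding extP_def by auto
    have "RPlus (Inter a1 b1) (Inter a2 b2) \<le>\<^sub>T RPlus a1 (Inter a2 b2)"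
      using sub.plus_mono_l[OF sub.inter_l[OF w(1) w(3)] ri(1) r(1) ri(2)] .
    also have "\<dots> \<le>\<^sub>T RPlus a1 a2"
      using plus_right_mono[OF r(1) ri(2) r(2) sub.inter_l[OF w(2) w(4)] lb(1)] .
    also have "\<dots> \<le>\<^sub>T s" using that unfolding extP_def by blast
    finally have 1: "RPlus (Inter a1 b1) (Inter a2 b2) \<le>\<^sub>T s" .
    have "RPlus (Inter a1 b1) (Inter a2 b2) \<le>\<^sub>T RPlus b1 (Inter a2 b2)"
      using sub.plus_mono_l[OF sub.inter_r[OF w(1) w(3)] ri(1) r(3) ri(2)] .
    also have "\<dots> \<le>\<^sub>T RPlus b1 b2"
      using plus_right_mono[OF r(3) ri(2) r(4) sub.inter_r[OF w(2) w(4)] lb(2)] .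
    also have "\<dots> \<le>\<^sub>T t" using that unfolding extP_def by blast
    finally have 2: "RPlus (Inter a1 b1) (Inter a2 b2) \<le>\<^sub>T t" .
    have "extP \<Gamma> P fs (Inter s t) (Inter a1 b1) (Inter a2 b2)"
      unfolding extP_def using ri 1 2 sub.inter_glb typing.t_inter that lb unfolding extP_def by auto
    then show ?thesis by blast
  qed
  show ?case using A om both sub.inter_glb by blast
next
  case (t_omega \<Gamma> M) then show ?case using sub.refl[OF wi(2)] by blast
next
  case (t_sub \<Gamma> M s t)
  then show ?case unfolding extP_def using sub.trans by blast
qed simp_all




theorem lemma3p14:
  assumes basis: "is_basis \<Gamma>"
    and wf: "wf_ty \<sigma>"
    and not_omega: "\<not> ty_eq \<sigma> Omega"
  shows
    "((typing \<Gamma> (Var x) \<sigma> \<longleftrightarrow> (\<exists>\<tau>. \<Gamma> x = Some \<tau> \<and> \<tau> \<le>\<^sub>T \<sigma>)))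
   \<and> ((typing \<Gamma> (Lam x M) \<sigma> \<longleftrightarrow>
       (\<exists>ps. (\<forall>(s, t) \<in> set ps. wf_ty s \<and> wf_ty t \<and> x \<notin> dom \<Gamma> \<and> typing (\<Gamma>(x \<mapsto> s)) M t)
             \<and> inter_arrs ps \<le>\<^sub>T \<sigma>)))
   \<and> ((typing \<Gamma> (App M N) \<sigma> \<longleftrightarrow> (\<exists>\<tau>. wf_ty \<tau> \<and> typing \<Gamma> M (Arr \<tau> \<sigma>) \<and> typing \<Gamma> N \<tau>)))
   \<and> (rec_wf fs \<longrightarrow>
     (typing \<Gamma> (Rec fs) \<sigma> \<longleftrightarrow>
       (\<exists>ss. length ss = length fs \<and>
             (\<forall>i < length fs. wf_ty (ss ! i) \<and> typing \<Gamma> (snd (fs ! i)) (ss ! i)) \<and>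
             rec_ty (zip (map fst fs) ss) \<le>\<^sub>T \<sigma>)))
   \<and> ((typing \<Gamma> (Sel M l) \<sigma> \<longleftrightarrow> typing \<Gamma> M (RField l \<sigma>)))
   \<and> (rec_wf fs \<longrightarrow>
     (typing \<Gamma> (Ext M fs) \<sigma> \<longleftrightarrow>
       (\<exists>\<rho>1 \<rho>2. is_rec \<rho>1 \<and> is_rec \<rho>2 \<and> typing \<Gamma> M \<rho>1 \<and> typing \<Gamma> (Rec fs) \<rho>2 \<and>
                 lbl_rec fs = lbl_ty \<rho>2 \<and> RPlus \<rho>1 \<rho>2 \<le>\<^sub>T \<sigma>)))"
proof -
  have nO: "\<not> Omega \<le>\<^sub>T \<sigma>" using not_omega sub.top[OF wf] unfolding ty_eq_def by blast
  have P1: "typing \<Gamma> (Var x) \<sigma> \<longleftrightarrow> (\<exists>\<tau>. \<Gamma> x = Some \<tau> \<and> \<tau> \<le>\<^sub>T \<sigma>)"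
  proof
    assume "typing \<Gamma> (Var x) \<sigma>"
    then show "\<exists>\<tau>. \<Gamma> x = Some \<tau> \<and> \<tau> \<le>\<^sub>T \<sigma>" using var_gen[OF _ basis HOL.refl] nO by blast
  next
    assume "\<exists>\<tau>. \<Gamma> x = Some \<tau> \<and> \<tau> \<le>\<^sub>T \<sigma>"
    then obtain \<tau> where "\<Gamma> x = Some \<tau>" "\<tau> \<le>\<^sub>T \<sigma>" by blast
    then show "typing \<Gamma> (Var x) \<sigma>" using typing.t_var typing.t_sub by metis
  qed
  have P2: "typing \<Gamma> (Lam x M) \<sigma> \<longleftrightarrow>
       (\<exists>ps. (\<forall>(s, t) \<in> set ps. wf_ty s \<and> wf_ty t \<and> x \<notin> dom \<Gamma> \<and> typing (\<Gamma>(x \<mapsto> s)) M t)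
             \<and> inter_arrs ps \<le>\<^sub>T \<sigma>)"
  proof
    assume "typing \<Gamma> (Lam x M) \<sigma>"
    then show "\<exists>ps. (\<forall>(s, t) \<in> set ps. wf_ty s \<and> wf_ty t \<and> x \<notin> dom \<Gamma> \<and> typing (\<Gamma>(x \<mapsto> s)) M t)
             \<and> inter_arrs ps \<le>\<^sub>T \<sigma>" using lam_gen[OF _ basis] unfolding lamP_def by blast
  next
    assume "\<exists>ps. (\<forall>(s, t) \<in> set ps. wf_ty s \<and> wf_ty t \<and> x \<notin> dom \<Gamma> \<and> typing (\<Gamma>(x \<mapsto> s)) M t)
             \<and> inter_arrs ps \<le>\<^sub>T \<sigma>"
    then obtain ps where ps: "\<forall>(s, t) \<in> set ps. wf_ty s \<and> wf_ty t \<and> x \<notin> dom \<Gamma> \<and> typing (\<Gamma>(x \<mapsto> s)) M t"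
      "inter_arrs ps \<le>\<^sub>T \<sigma>" by blast
    have "\<forall>(a,b)\<in>set ps. typing \<Gamma> (Lam x M) (Arr a b)" 
    proof (intro ballI, clarify)
      fix a b assume "(a, b) \<in> set ps"
      then have "x \<notin> dom \<Gamma>" "wf_ty a" "typing (\<Gamma>(x \<mapsto> a)) M b" using ps(1) by auto
      then show "typing \<Gamma> (Lam x M) (Arr a b)" by (rule typing.t_lam)
    qed
    then show "typing \<Gamma> (Lam x M) \<sigma>" using typing.t_sub[OF typing_inter_arrs ps(2)] by blast
  qed
  have P3: "typing \<Gamma> (App M N) \<sigma> \<longleftrightarrow> (\<exists>\<tau>. wf_ty \<tau> \<and> typing \<Gamma> M (Arr \<tau> \<sigma>) \<and> typing \<Gamma> N \<tau>)"
  proof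
    assume "typing \<Gamma> (App M N) \<sigma>"
    then show "\<exists>\<tau>. wf_ty \<tau> \<and> typing \<Gamma> M (Arr \<tau> \<sigma>) \<and> typing \<Gamma> N \<tau>"
      using app_gen[OF _ basis HOL.refl] nO by blast
  qed (blast intro: typing.t_app)
  have P4: "typing \<Gamma> (Rec fs) \<sigma> \<longleftrightarrow>
       (\<exists>ss. length ss = length fs \<and>
             (\<forall>i < length fs. wf_ty (ss ! i) \<and> typing \<Gamma> (snd (fs ! i)) (ss ! i)) \<and>
             rec_ty (zip (map fst fs) ss) \<le>\<^sub>T \<sigma>)"
  proof
    assume "typing \<Gamma> (Rec fs) \<sigma>"
    then show "\<exists>ss. length ss = length fs \<and>
             (\<forall>i < length fs. wf_ty (ss ! i) \<and> typing \<Gamma> (snd (fs ! i)) (ss ! i)) \<and>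
             rec_ty (zip (map fst fs) ss) \<le>\<^sub>T \<sigma>" using rec_gen[OF _ basis] unfolding recP_def by blast
  next
    assume "\<exists>ss. length ss = length fs \<and>
             (\<forall>i < length fs. wf_ty (ss ! i) \<and> typing \<Gamma> (snd (fs ! i)) (ss ! i)) \<and>
             rec_ty (zip (map fst fs) ss) \<le>\<^sub>T \<sigma>"
    then obtain ss where ss: "length ss = length fs"
      "\<forall>i < length fs. wf_ty (ss ! i) \<and> typing \<Gamma> (snd (fs ! i)) (ss ! i)"
      "rec_ty (zip (map fst fs) ss) \<le>\<^sub>T \<sigma>" by blast
    have "\<forall>(l,a)\<in>set (zip (map fst fs) ss). typing \<Gamma> (Rec fs) (RField l a)"
    proof (intro ballI, clarify)
      fix l a assume "(l, a) \<in> set (zip (map fst fs) ss)"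
      then obtain i where i: "i < length (map fst fs)" "l = map fst fs ! i" "a = ss ! i"
        using zip_dest[of l a "map fst fs" ss] ss(1) by auto
      then have i': "i < length fs" "l = fst (fs ! i)" by auto
      have "(l, snd (fs ! i)) \<in> set fs" using i' by simp
      moreover have "typing \<Gamma> (snd (fs ! i)) a" using ss(2) i' i(3) by blast
      ultimately show "typing \<Gamma> (Rec fs) (RField l a)" by (rule typing.t_rec_field)
    qed
    then have "typing \<Gamma> (Rec fs) (rec_ty (zip (map fst fs) ss))"
      by (rule typing_rec_ty[OF typing.t_rec_empty])
    then show "typing \<Gamma> (Rec fs) \<sigma>" using typing.t_sub ss(3) by blast
  qed
  have P5: "typing \<Gamma> (Sel M l) \<sigma> \<longleftrightarrow> typing \<Gamma> M (RField l \<sigma>)"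
  proof
    assume "typing \<Gamma> (Sel M l) \<sigma>"
    then show "typing \<Gamma> M (RField l \<sigma>)" using sel_gen[OF _ basis HOL.refl] nO by blast
  qed (rule typing.t_sel)
  have P6: "typing \<Gamma> (Ext M fs) \<sigma> \<longleftrightarrow>
       (\<exists>\<rho>1 \<rho>2. is_rec \<rho>1 \<and> is_rec \<rho>2 \<and> typing \<Gamma> M \<rho>1 \<and> typing \<Gamma> (Rec fs) \<rho>2 \<and>
                 lbl_rec fs = lbl_ty \<rho>2 \<and> RPlus \<rho>1 \<rho>2 \<le>\<^sub>T \<sigma>)"
  proof
    assume "typing \<Gamma> (Ext M fs) \<sigma>"
    then show "\<exists>\<rho>1 \<rho>2. is_rec \<rho>1 \<and> is_rec \<rho>2 \<and> typing \<Gamma> M \<rho>1 \<and> typing \<Gamma> (Rec fs) \<rho>2 \<and>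
                 lbl_rec fs = lbl_ty \<rho>2 \<and> RPlus \<rho>1 \<rho>2 \<le>\<^sub>T \<sigma>"
      using ext_gen[OF _ basis HOL.refl] nO unfolding extP_def by blast
  next
    assume "\<exists>\<rho>1 \<rho>2. is_rec \<rho>1 \<and> is_rec \<rho>2 \<and> typing \<Gamma> M \<rho>1 \<and> typing \<Gamma> (Rec fs) \<rho>2 \<and>
                 lbl_rec fs = lbl_ty \<rho>2 \<and> RPlus \<rho>1 \<rho>2 \<le>\<^sub>T \<sigma>"
    then obtain \<rho>1 \<rho>2 where r: "is_rec \<rho>1" "is_rec \<rho>2" "typing \<Gamma> M \<rho>1" "typing \<Gamma> (Rec fs) \<rho>2"
       "lbl_rec fs = lbl_ty \<rho>2" "RPlus \<rho>1 \<rho>2 \<le>\<^sub>T \<sigma>" by blast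
    show "typing \<Gamma> (Ext M fs) \<sigma>" using typing.t_sub[OF typing.t_ext[OF r(3,4,1,2,5)] r(6)] .
  qed
  show ?thesis using P1 P2 P3 P4 P5 P6 by blast
qed


end
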